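(* Let $R$ be an affine algebra over a field $K$ with no zero divisors which is not amenable. Then there exist a finite-dimensional $K$-subspace $Z\subseteq R$ and $\epsilon>0$ such that for every nonzero finite-dimensional $K$-subspace $V\subseteq R$, $$\frac{\dim_K(VZ+V)}{\dim_K(V)}>1+\epsilon.$$
   Context: An affine algebra is a finitely generated associative algebra over $K$, not necessarily unital. For subspaces $V,Z$, $VZ$ denotes the $K$-span of all products $vz$, $v\in V$, $z\in Z$. $R$ is amenable if there exist finite-dimensional $K$-subspaces $W_1\subseteq W_2\subseteq\cdots$ with $\bigcup_nW_n=R$ such that for every $r\in R$, $\lim_{n\to\infty}\dim_K(W_nr+W_n)/\dim_K(W_n)=1$. *)

theory Defs
  imports Complex_Main
begin

text \<open>An associative (not necessarily unital) algebra over a field 'k, carried by the type 'a,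
  with scalar multiplication scale: 'a is a 'k-vector space and multiplication is bilinear.\<close>
definition is_algebra :: "('k::field \<Rightarrow> 'a::ring \<Rightarrow> 'a) \<Rightarrow> bool" where
  "is_algebra scale \<longleftrightarrow> vector_space scale \<and>
     (\<forall>c x y. scale c (x * y) = scale c x * y \<and> scale c (x * y) = x * scale c y)"

inductive_set subalg_gen :: "('k::field \<Rightarrow> 'a::ring \<Rightarrow> 'a) \<Rightarrow> 'a set \<Rightarrow> 'a set"
  for scale :: "'k \<Rightarrow> 'a \<Rightarrow> 'a" and S :: "'a set" where
  gen: "x \<in> S \<Longrightarrow> x \<in> subalg_gen scale S"
| zero: "0 \<in> subalg_gen scale S"
| add: "x \<in> subalg_gen scale S \<Longrightarrow> y \<in> subalg_gen scale S \<Longrightarrow> x + y \<in> subalg_gen scale S"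
| smult: "x \<in> subalg_gen scale S \<Longrightarrow> scale c x \<in> subalg_gen scale S"
| mult: "x \<in> subalg_gen scale S \<Longrightarrow> y \<in> subalg_gen scale S \<Longrightarrow> x * y \<in> subalg_gen scale S"

definition affine_algebra :: "('k::field \<Rightarrow> 'a::ring \<Rightarrow> 'a) \<Rightarrow> bool" where
  "affine_algebra scale \<longleftrightarrow> is_algebra scale \<and> (\<exists>S. finite S \<and> subalg_gen scale S = UNIV)"

definition fd_subspace :: "('k::field \<Rightarrow> 'a::ring \<Rightarrow> 'a) \<Rightarrow> 'a set \<Rightarrow> bool" where
  "fd_subspace scale V \<longleftrightarrow> module.subspace scale V \<and> (\<exists>B. finite B \<and> V = module.span scale B)"

definition prod_space :: "('k::field \<Rightarrow> 'a::ring \<Rightarrow> 'a) \<Rightarrow> 'a set \<Rightarrow> 'a set \<Rightarrow> 'a set" where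
  "prod_space scale V Z = module.span scale {v * z | v z. v \<in> V \<and> z \<in> Z}"

definition sum_space :: "'a::ab_group_add set \<Rightarrow> 'a set \<Rightarrow> 'a set" where
  "sum_space A B = {x + y | x y. x \<in> A \<and> y \<in> B}"

definition amenable :: "('k::field \<Rightarrow> 'a::ring \<Rightarrow> 'a) \<Rightarrow> bool" where
  "amenable scale \<longleftrightarrow> (\<exists>W :: nat \<Rightarrow> 'a set.
     (\<forall>n. fd_subspace scale (W n)) \<and> (\<forall>n. W n \<subseteq> W (Suc n)) \<and> (\<Union>n. W n) = UNIV \<and>
     (\<forall>r. (\<lambda>n. real (vector_space.dim scale (sum_space {w * r | w. w \<in> W n} (W n)))
               / real (vector_space.dim scale (W n))) \<longlonglongrightarrow> 1))"

end

theory Submission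
  imports Defs
begin

primrec gP :: "'a::times set \<Rightarrow> nat \<Rightarrow> 'a set" where
  "gP S 0 = S"
| "gP S (Suc n) = gP S n \<union> {a * b | a b. a \<in> gP S n \<and> b \<in> gP S n}"

primrec Wseq :: "(nat \<Rightarrow> 'a::ab_group_add set \<Rightarrow> 'a set) \<Rightarrow> (nat \<Rightarrow> 'a set) \<Rightarrow> nat \<Rightarrow> 'a set" where
  "Wseq st U 0 = st 0 (U 0)"
| "Wseq st U (Suc n) = st (Suc n) (sum_space (Wseq st U n) (U (Suc n)))"

lemma gP_mono: "m \<le> n \<Longrightarrow> gP S m \<subseteq> gP S n"
  by (induction n) (auto simp: le_Suc_eq)

locale falg = vector_space scale for scale :: "'k::field \<Rightarrow> 'a::ring_no_zero_divisors \<Rightarrow> 'a" +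
  assumes bil1: "scale c (x * y) = scale c x * y" and bil2: "scale c (x * y) = x * scale c y"
begin

lemma prod_span:
  assumes x: "x \<in> span A" and y: "y \<in> span B"
  shows "x * y \<in> span {a * b | a b. a \<in> A \<and> b \<in> B}"
proof -
  let ?P = "{a * b | a b. a \<in> A \<and> b \<in> B}"
  have 1: "a * y \<in> span ?P" if a: "a \<in> A" for a
  proof -
    have "subspace {y. a * y \<in> span ?P}"
      unfolding subspace_def by (auto simp: distrib_left intro: span_add span_zero span_scale simp flip: bil2)
    moreover have "B \<subseteq> {y. a * y \<in> span ?P}" using a by (auto intro: span_base)
    ultimately show ?thesis using span_minimal y by blast
  qed
  have "subspace {x. x * y \<in> span ?P}"
    unfolding subspace_def by (auto simp: distrib_right intro: span_add span_zero span_scale simp flip: bil1)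
  moreover have "A \<subseteq> {x. x * y \<in> span ?P}" using 1 by auto
  ultimately show ?thesis using span_minimal x by blast
qed

lemma prod_space_span:
  "prod_space scale (span A) (span B) = span {a * b | a b. a \<in> A \<and> b \<in> B}"
  unfolding prod_space_def span_eq
proof
  show "{v * z |v z. v \<in> span A \<and> z \<in> span B} \<subseteq> span {a * b |a b. a \<in> A \<and> b \<in> B}"
    using prod_span by blast
  show "{a * b |a b. a \<in> A \<and> b \<in> B} \<subseteq> span {v * z |v z. v \<in> span A \<and> z \<in> span B}"
    by (auto intro!: span_base dest: span_base[of _ A] span_base[of _ B])
qed

lemma finite_prodset: "finite A \<Longrightarrow> finite B \<Longrightarrow> finite {a * b | a b. a \<in> A \<and> b \<in> B}"
proof -
  assume "finite A" "finite B"
  then have "finite ((\<lambda>(a,b). a * b) ` (A \<times> B))" by auto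
  moreover have "{a * b | a b. a \<in> A \<and> b \<in> B} = (\<lambda>(a,b). a * b) ` (A \<times> B)" by auto
  ultimately show ?thesis by simp
qed

lemma sum_space_span: "sum_space (span A) (span B) = span (A \<union> B)"
  unfolding sum_space_def span_Un by simp

lemma dim_mono': "S \<subseteq> T \<Longrightarrow> T \<subseteq> span W \<Longrightarrow> finite W \<Longrightarrow> dim S \<le> dim T"
proof -
  assume a: "S \<subseteq> T" "T \<subseteq> span W" "finite W"
  obtain B where B: "B \<subseteq> T" "independent B" "T \<subseteq> span B" "card B = dim T"
    using basis_exists by blast
  have "finite B" using independent_span_bound[OF a(3) B(2)] B(1) a(2) by auto
  then show ?thesis using dim_le_card[of S B] a B by auto
qed

lemma indep_le_dim: "independent I \<Longrightarrow> I \<subseteq> T \<Longrightarrow> T \<subseteq> span W \<Longrightarrow> finite W \<Longrightarrow> card I \<le> dim T"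
proof -
  assume a: "independent I" "I \<subseteq> T" "T \<subseteq> span W" "finite W"
  obtain B where B: "B \<subseteq> T" "independent B" "T \<subseteq> span B" "card B = dim T"
    using basis_exists by blast
  have "finite B" using independent_span_bound[OF a(4) B(2)] B(1) a(3) by auto
  then show ?thesis using independent_span_bound[OF _ a(1), of B] a B by auto
qed

lemma dim_sum_le: "finite A \<Longrightarrow> finite B \<Longrightarrow> dim (sum_space (span A) (span B)) \<le> dim (span A) + dim (span B)"
proof -
  assume f: "finite A" "finite B"
  obtain BA where BA: "BA \<subseteq> span A" "independent BA" "span A \<subseteq> span BA" "card BA = dim (span A)"
    using basis_exists by blast
  obtain BB where BB: "BB \<subseteq> span B" "independent BB" "span B \<subseteq> span BB" "card BB = dim (span B)"
    using basis_exists by blast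
  have fA: "finite BA" using independent_span_bound[OF f(1) BA(2)] BA(1) by auto
  have fB: "finite BB" using independent_span_bound[OF f(2) BB(2)] BB(1) by auto
  have "span A = span BA" using BA by (metis span_eq span_span)
  moreover have "span B = span BB" using BB by (metis span_eq span_span)
  ultimately have "sum_space (span A) (span B) = span (BA \<union> BB)" by (simp add: sum_space_span)
  then have "dim (sum_space (span A) (span B)) \<le> card (BA \<union> BB)"
    using dim_le_card[of "span (BA \<union> BB)" "BA \<union> BB"] fA fB by simp
  also have "\<dots> \<le> card BA + card BB" by (rule card_Un_le)
  finally show ?thesis using BA BB by simp
qed

lemma dim_pos: "finite B \<Longrightarrow> span B \<noteq> {0} \<Longrightarrow> dim (span B) > 0"
proof (rule ccontr)
  assume a: "finite B" "span B \<noteq> {0}" "\<not> dim (span B) > 0"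
  obtain BB where BB: "BB \<subseteq> span B" "independent BB" "span B \<subseteq> span BB" "card BB = dim (span B)"
    using basis_exists by blast
  have "finite BB" using independent_span_bound[OF a(1) BB(2)] BB(1) by auto
  then have "BB = {}" using a BB by auto
  then show False using a BB span_zero by auto
qed

lemma lmult_hom: "module_hom scale scale (\<lambda>z. v * z)"
  by (simp add: module_hom_iff distrib_left module_axioms flip: bil2)

lemma indep_lmult:
  assumes "v \<noteq> 0" "independent T"
  shows "independent ((\<lambda>z. v * z) ` T)" "card ((\<lambda>z. v * z) ` T) = card T"
proof -
  have inj: "inj (\<lambda>z. v * z)" using assms(1) by (auto simp: inj_on_def)
  show "independent ((\<lambda>z. v * z) ` T)"
    using module_hom.independent_injective_image[OF lmult_hom assms(2)] inj
    by (meson inj_on_subset subset_UNIV)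
  show "card ((\<lambda>z. v * z) ` T) = card T"
    using inj by (meson card_image inj_on_subset subset_UNIV)
qed

lemma pset_mono: "A \<subseteq> A' \<Longrightarrow> B \<subseteq> B' \<Longrightarrow> {a * b | a b. a \<in> A \<and> b \<in> B} \<subseteq> {a * b | a b. a \<in> A' \<and> b \<in> B'}"
  by blast

lemma extend:
  assumes H: "\<And>Z e. fd_subspace scale Z \<Longrightarrow> e > 0 \<Longrightarrow> \<exists>V. fd_subspace scale V \<and> V \<noteq> {0} \<and>
      real (dim (sum_space (prod_space scale V Z) V)) / real (dim V) \<le> 1 + e"
    and inf: "\<And>W. finite W \<Longrightarrow> span W \<noteq> UNIV"
    and fZ: "finite BZ" and fU: "finite BU" and e: "(e::real) > 0"
  shows "\<exists>BV. finite BV \<and> span BU \<subseteq> span BV \<and> span BV \<noteq> {0} \<and>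
     real (dim (sum_space (prod_space scale (span BV) (span BZ)) (span BV))) \<le> (1+e) * real (dim (span BV))"
proof -
  define PU where "PU = {a * b | a b. a \<in> BU \<and> b \<in> BZ}"
  define c where "c = dim (span (PU \<union> BU))"
  have SU: "sum_space (prod_space scale (span BU) (span BZ)) (span BU) = span (PU \<union> BU)"
    by (simp add: prod_space_span sum_space_span PU_def)
  define n where "n = nat \<lceil>real c * (2/e+1)\<rceil>"
  obtain BM where BM: "independent BM" "UNIV \<subseteq> span BM"
    using maximal_independent_subset[of UNIV] by blast
  have "infinite BM" using inf BM by auto
  then obtain T where T: "T \<subseteq> BM" "finite T" "card T = n"
    using infinite_arbitrarily_large by blast
  have iT: "independent T" using independent_mono[OF BM(1) T(1)] .
  have "fd_subspace scale (span (BZ \<union> T))"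
    unfolding fd_subspace_def using fZ T(2) by blast
  then obtain V0 where V0: "fd_subspace scale V0" "V0 \<noteq> {0}"
    "real (dim (sum_space (prod_space scale V0 (span (BZ \<union> T))) V0)) / real (dim V0) \<le> 1 + e/2"
    using H[of "span (BZ \<union> T)" "e/2"] e by auto
  obtain B0 where B0: "finite B0" "V0 = span B0" using V0(1) unfolding fd_subspace_def by blast
  define P0 where "P0 = {a * b | a b. a \<in> B0 \<and> b \<in> BZ \<union> T}"
  have S0: "sum_space (prod_space scale V0 (span (BZ \<union> T))) V0 = span (P0 \<union> B0)"
    by (simp add: B0 prod_space_span sum_space_span P0_def)
  have fP0: "finite P0" unfolding P0_def using finite_prodset[of B0 "BZ \<union> T"] B0 fZ T by blast
  have fPU: "finite PU" unfolding PU_def using finite_prodset fU fZ by auto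
  define D0 where "D0 = dim V0"
  have D0pos: "D0 > 0" unfolding D0_def using dim_pos B0 V0 by auto
  have dS0: "real (dim (span (P0 \<union> B0))) \<le> (1 + e/2) * D0"
    using V0(3) D0pos unfolding S0 D0_def by (simp add: pos_divide_le_eq)
  obtain v0 where v0: "v0 \<in> V0" "v0 \<noteq> 0" using V0(2) B0 span_zero by blast
  have "(\<lambda>z. v0 * z) ` T \<subseteq> sum_space (prod_space scale V0 (span (BZ \<union> T))) V0"
  proof
    fix x assume "x \<in> (\<lambda>z. v0 * z) ` T"
    then obtain t where t: "t \<in> T" "x = v0 * t" by blast
    have "x \<in> prod_space scale V0 (span (BZ \<union> T))"
      unfolding prod_space_def using t v0 by (intro span_base) (auto intro: span_base)
    then show "x \<in> sum_space (prod_space scale V0 (span (BZ \<union> T))) V0"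
      unfolding sum_space_def using B0 span_zero by force
  qed
  then have "card ((\<lambda>z. v0 * z) ` T) \<le> dim (span (P0 \<union> B0))"
    using indep_le_dim[OF indep_lmult(1)[OF v0(2) iT], of "span (P0 \<union> B0)" "P0 \<union> B0"] fP0 B0 S0 by auto
  then have nle: "n \<le> dim (span (P0 \<union> B0))" using indep_lmult(2)[OF v0(2) iT] T by simp
  have "real c * (2/e+1) \<le> n" unfolding n_def by linarith
  then have "real c * (2/e+1) \<le> (1 + e/2) * D0" using nle dS0 by linarith
  then have "real c * (2/e+1) * (e/2) \<le> (1 + e/2) * D0 * (e/2)" using e by (simp add: mult_right_mono)
  moreover have "real c * (2/e+1) * (e/2) = real c * (1 + e/2)" using e by (simp add: field_simps)
  ultimately have "real c * (1 + e/2) \<le> (1 + e/2) * (D0 * (e/2))" by (metis mult.assoc)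
  then have cle: "real c \<le> D0 * (e/2)" using e
    by (metis mult.commute mult_le_cancel_left_pos add_pos_pos half_gt_zero zero_less_one)
  define BV where "BV = B0 \<union> BU"
  have fBV: "finite BV" using B0 fU BV_def by auto
  have sub1: "span BU \<subseteq> span BV" unfolding BV_def by (rule span_mono) auto
  have sub0: "V0 \<subseteq> span BV" unfolding BV_def B0 by (rule span_mono) auto
  have nz: "span BV \<noteq> {0}" using sub0 V0(2) B0 span_zero by blast
  have D0le: "D0 \<le> dim (span BV)" unfolding D0_def using dim_mono'[OF sub0 _ fBV] by simp
  have eqL: "sum_space (prod_space scale (span BV) (span BZ)) (span BV) =
      span ({a * b | a b. a \<in> BV \<and> b \<in> BZ} \<union> BV)"
    by (simp add: prod_space_span sum_space_span)
  have "{a * b | a b. a \<in> BV \<and> b \<in> BZ} \<union> BV \<subseteq> (P0 \<union> B0) \<union> (PU \<union> BU)"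
    unfolding BV_def P0_def PU_def by blast
  then have sub2: "sum_space (prod_space scale (span BV) (span BZ)) (span BV) \<subseteq> span ((P0 \<union> B0) \<union> (PU \<union> BU))"
    unfolding eqL by (rule span_mono)
  have fW: "finite ((P0 \<union> B0) \<union> (PU \<union> BU))" using fP0 B0 fPU fU by auto
  have "dim (sum_space (prod_space scale (span BV) (span BZ)) (span BV)) \<le> dim (span ((P0 \<union> B0) \<union> (PU \<union> BU)))"
    using dim_mono'[OF sub2 _ fW] by simp
  also have "\<dots> \<le> dim (span (P0 \<union> B0)) + c"
    using dim_sum_le[of "P0 \<union> B0" "PU \<union> BU"] fP0 B0 fPU fU unfolding c_def
    by (simp add: sum_space_span)
  finally have "real (dim (sum_space (prod_space scale (span BV) (span BZ)) (span BV))) \<le> (1 + e/2) * D0 + D0 * (e/2)"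
    using dS0 cle by linarith
  also have "\<dots> = (1+e) * D0" by (simp add: field_simps)
  also have "\<dots> \<le> (1+e) * real (dim (span BV))" using D0le e by (simp add: mult_left_mono)
  finally show ?thesis using fBV sub1 nz by blast
qed

lemma gP_finite: "finite S \<Longrightarrow> finite (gP S n)"
  by (induction n) (auto intro: finite_prodset)

lemma gP_exhaust: "x \<in> subalg_gen scale S \<Longrightarrow> \<exists>n. x \<in> span (gP S n)"
proof (induction rule: subalg_gen.induct)
  case (gen x) then show ?case by (metis gP.simps(1) span_base)
next
  case zero then show ?case using span_zero by blast
next
  case (add x y)
  then obtain m n where "x \<in> span (gP S m)" "y \<in> span (gP S n)" by blast
  then have "x \<in> span (gP S (max m n))" "y \<in> span (gP S (max m n))"
    using span_mono[OF gP_mono[of m "max m n" S]] span_mono[OF gP_mono[of n "max m n" S]] by auto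
  then show ?case using span_add by blast
next
  case (smult x c) then show ?case using span_scale by blast
next
  case (mult x y)
  then obtain m n where "x \<in> span (gP S m)" "y \<in> span (gP S n)" by blast
  then have "x \<in> span (gP S (max m n))" "y \<in> span (gP S (max m n))"
    using span_mono[OF gP_mono[of m "max m n" S]] span_mono[OF gP_mono[of n "max m n" S]] by auto
  then have "x * y \<in> span {a * b | a b. a \<in> gP S (max m n) \<and> b \<in> gP S (max m n)}"
    by (rule prod_span)
  also have "\<dots> \<subseteq> span (gP S (Suc (max m n)))" by (rule span_mono) auto
  finally show ?case by blast
qed

lemma amenable_inf:
  assumes H: "\<And>Z e. fd_subspace scale Z \<Longrightarrow> e > 0 \<Longrightarrow> \<exists>V. fd_subspace scale V \<and> V \<noteq> {0} \<and>
      real (dim (sum_space (prod_space scale V Z) V)) / real (dim V) \<le> 1 + e"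
    and inf: "\<And>W. finite W \<Longrightarrow> span W \<noteq> UNIV"
    and S: "finite S" "subalg_gen scale S = UNIV"
  shows "amenable scale"
proof -
  define U where "U n = span (gP S n)" for n
  define good where "good n X V \<longleftrightarrow> (\<exists>BV. finite BV \<and> V = span BV \<and> X \<subseteq> V \<and> V \<noteq> {0} \<and>
     real (dim (sum_space (prod_space scale V (U n)) V)) \<le> (1 + 1 / (real n + 1)) * real (dim V))" for n X V
  define st where "st n X = (SOME V. good n X V)" for n X
  have stgood: "good n (span BX) (st n (span BX))" if fBX: "finite BX" for n BX
  proof -
    obtain BV where "finite BV \<and> span BX \<subseteq> span BV \<and> span BV \<noteq> {0} \<and>
     real (dim (sum_space (prod_space scale (span BV) (span (gP S n))) (span BV))) \<le> (1 + 1 / (real n + 1)) * real (dim (span BV))"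
      using extend[OF H inf gP_finite[OF S(1), of n] fBX, of "1 / (real n + 1)"] by auto
    then have "good n (span BX) (span BV)" unfolding good_def U_def by blast
    then show ?thesis unfolding st_def by (rule someI)
  qed
  define W where "W = Wseq st U"
  define inp where "inp n = (case n of 0 \<Rightarrow> U 0 | Suc m \<Rightarrow> sum_space (W m) (U (Suc m)))" for n
  have Wg: "good n (inp n) (W n)" for n
  proof (induction n)
    case 0
    then show ?case unfolding W_def inp_def U_def using stgood[OF S(1), of 0] by simp
  next
    case (Suc n)
    then obtain BV where BV: "finite BV" "W n = span BV" unfolding good_def by blast
    have eq: "inp (Suc n) = span (BV \<union> gP S (Suc n))"
      unfolding inp_def U_def using BV by (simp only: nat.case sum_space_span)
    have fin: "finite (BV \<union> gP S (Suc n))" using BV gP_finite[OF S(1)] by blast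
    have Weq: "W (Suc n) = st (Suc n) (inp (Suc n))" unfolding W_def inp_def by simp
    show ?case unfolding Weq eq by (rule stgood[OF fin])
  qed
  have Wspan: "\<exists>BV. finite BV \<and> W n = span BV" for n using Wg[of n] unfolding good_def by blast
  have Wnz: "W n \<noteq> {0}" for n using Wg[of n] unfolding good_def by blast
  have Wbound: "real (dim (sum_space (prod_space scale (W n) (U n)) (W n))) \<le> (1 + 1 / (real n + 1)) * real (dim (W n))" for n
    using Wg[of n] unfolding good_def by blast
  have inpW: "inp n \<subseteq> W n" for n using Wg[of n] unfolding good_def by blast
  have UW: "U n \<subseteq> W n" for n
  proof (cases n)
    case 0 then show ?thesis using inpW[of 0] by (simp add: inp_def)
  next
    case (Suc m)
    have "U n \<subseteq> inp n" unfolding Suc inp_def sum_space_def using Wspan[of m] span_zero by force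
    then show ?thesis using inpW by blast
  qed
  have mono: "W n \<subseteq> W (Suc n)" for n
  proof -
    have "W n \<subseteq> inp (Suc n)" unfolding inp_def sum_space_def U_def using span_zero by force
    then show ?thesis using inpW by blast
  qed
  have fdW: "fd_subspace scale (W n)" for n
    unfolding fd_subspace_def using Wspan[of n] by auto
  have Un: "(\<Union>n. W n) = UNIV"
  proof -
    have "x \<in> (\<Union>n. W n)" for x
    proof -
      obtain n where "x \<in> U n" using gP_exhaust[of x S] S(2) U_def by auto
      then show ?thesis using UW by blast
    qed
    then show ?thesis by blast
  qed
  have lim: "(\<lambda>n. real (dim (sum_space {w * r | w. w \<in> W n} (W n))) / real (dim (W n))) \<longlonglongrightarrow> 1" for r
  proof -
    obtain m where m: "r \<in> U m" using gP_exhaust[of r S] S(2) U_def by auto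
    have bnd: "1 \<le> real (dim (sum_space {w * r | w. w \<in> W n} (W n))) / real (dim (W n)) \<and>
       real (dim (sum_space {w * r | w. w \<in> W n} (W n))) / real (dim (W n)) \<le> 1 + inverse (real (Suc n))"
      if n: "n \<ge> m" for n
    proof -
      have rU: "r \<in> U n" using m span_mono[OF gP_mono[OF n]] U_def by auto
      obtain BV where BV: "finite BV" "W n = span BV" using Wspan by blast
      define A where "A = sum_space {w * r | w. w \<in> W n} (W n)"
      define Bg where "Bg = sum_space (prod_space scale (W n) (U n)) (W n)"
      have BgS: "Bg = span ({a * b | a b. a \<in> BV \<and> b \<in> gP S n} \<union> BV)"
        unfolding Bg_def BV U_def by (simp add: prod_space_span sum_space_span)
      have fG: "finite ({a * b | a b. a \<in> BV \<and> b \<in> gP S n} \<union> BV)"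
        using finite_prodset[OF BV(1) gP_finite[OF S(1)]] BV(1) by blast
      have AB: "A \<subseteq> Bg"
      proof
        fix x assume "x \<in> A"
        then obtain w y where wy: "x = w * r + y" "w \<in> W n" "y \<in> W n" unfolding A_def sum_space_def by blast
        have "w * r \<in> prod_space scale (W n) (U n)" unfolding prod_space_def
          using wy rU by (intro span_base) blast
        then show "x \<in> Bg" unfolding Bg_def sum_space_def using wy by blast
      qed
      have WA: "W n \<subseteq> A"
      proof
        fix x assume "x \<in> W n"
        moreover have "0 \<in> W n" using BV span_zero by simp
        ultimately show "x \<in> A" unfolding A_def sum_space_def by force
      qed
      have d1: "dim (W n) \<le> dim A" using dim_mono'[OF WA] AB BgS fG by auto
      have d2: "dim A \<le> dim Bg" using dim_mono'[OF AB] BgS fG by auto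
      have pos: "dim (W n) > 0" using dim_pos[OF BV(1)] Wnz BV by auto
      have "real (dim A) \<le> (1 + 1 / (real n + 1)) * real (dim (W n))"
        using d2 Wbound[of n] unfolding Bg_def by linarith
      then have "real (dim A) / real (dim (W n)) \<le> 1 + 1 / (real n + 1)"
        using pos by (simp add: pos_divide_le_eq)
      moreover have "1 \<le> real (dim A) / real (dim (W n))" using d1 pos by simp
      moreover have "inverse (real (Suc n)) = 1 / (real n + 1)" by (simp add: field_simps)
      ultimately show ?thesis unfolding A_def by simp
    qed
    show ?thesis
    proof (rule tendsto_sandwich[of "\<lambda>n. 1" _ sequentially "\<lambda>n. 1 + inverse (real (Suc n))"])
      show "\<forall>\<^sub>F n in sequentially. 1 \<le> real (dim (sum_space {w * r | w. w \<in> W n} (W n))) / real (dim (W n))"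
        unfolding eventually_sequentially using bnd by blast
      show "\<forall>\<^sub>F n in sequentially. real (dim (sum_space {w * r | w. w \<in> W n} (W n))) / real (dim (W n)) \<le> 1 + inverse (real (Suc n))"
        unfolding eventually_sequentially using bnd by blast
      show "(\<lambda>n. 1::real) \<longlonglongrightarrow> 1" by simp
      show "(\<lambda>n. 1 + inverse (real (Suc n))) \<longlonglongrightarrow> 1" by (rule LIMSEQ_inverse_real_of_nat_add)
    qed
  qed
  show ?thesis unfolding amenable_def
    by (rule exI[of _ W]) (use fdW mono Un lim in auto)
qed

lemma amenable_fin:
  assumes "finite W0" "span W0 = UNIV" "(x::'a) \<noteq> 0"
  shows "amenable scale"
proof -
  have fd: "fd_subspace scale UNIV" unfolding fd_subspace_def using assms by auto
  have sU: "sum_space {w * r | w. w \<in> (UNIV::'a set)} UNIV = UNIV" for r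
  proof -
    have "x \<in> sum_space {w * r | w. w \<in> (UNIV::'a set)} UNIV" for x
    proof -
      have "x = 0 * r + x" by simp
      then show ?thesis unfolding sum_space_def by blast
    qed
    then show ?thesis by blast
  qed
  have pos: "dim (UNIV::'a set) > 0" proof -
    have "span W0 \<noteq> {0}" using assms(2,3) by auto
    then show ?thesis using dim_pos[OF assms(1)] assms(2) by simp
  qed
  show ?thesis unfolding amenable_def
    by (rule exI[of _ "\<lambda>n. UNIV"]) (use fd sU pos in auto)
qed

end

theorem lemma1:
  fixes scale :: "'k::field \<Rightarrow> 'a::ring_no_zero_divisors \<Rightarrow> 'a"
  assumes "affine_algebra scale"
    and "\<not> amenable scale"
  shows "\<exists>Z \<epsilon>. fd_subspace scale Z \<and> \<epsilon> > (0::real) \<and>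
           (\<forall>V. fd_subspace scale V \<and> V \<noteq> {0} \<longrightarrow>
              real (vector_space.dim scale (sum_space (prod_space scale V Z) V))
                / real (vector_space.dim scale V) > 1 + \<epsilon>)"
proof (rule ccontr)
  assume neg: "\<not> ?thesis"
  from assms(1) obtain S where S: "finite S" "subalg_gen scale S = UNIV" and alg: "is_algebra scale"
    unfolding affine_algebra_def by blast
  interpret falg scale
    using alg unfolding is_algebra_def by (intro falg.intro falg_axioms.intro) blast+
  have H: "\<exists>V. fd_subspace scale V \<and> V \<noteq> {0} \<and>
      real (dim (sum_space (prod_space scale V Z) V)) / real (dim V) \<le> 1 + e"
    if "fd_subspace scale Z" "e > 0" for Z e
    using neg that by (meson not_less)
  show False
  proof (cases "\<exists>W. finite W \<and> span W = UNIV")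
    case True
    then obtain W0 where W0: "finite W0" "span W0 = UNIV" by blast
    have "fd_subspace scale {0}" unfolding fd_subspace_def
      by (auto intro: exI[of _ "{}"])
    then obtain V where V: "fd_subspace scale V" "V \<noteq> {0}" using H[of "{0}" 1] by auto
    then obtain x where "x \<in> V" "x \<noteq> 0" unfolding fd_subspace_def using subspace_0 by blast
    then show False using amenable_fin[OF W0] assms(2) by blast
  next
    case False
    then have "\<And>W. finite W \<Longrightarrow> span W \<noteq> UNIV" by blast
    then show False using amenable_inf[OF H _ S] assms(2) by blast
  qed
qed

end
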